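(* Let $R$ be a commutative ring, $n\ge1$, and $f\in(T_n(R))[x]$. Then $f(C)=0$ for all $C\in T_n(R)$ if and only if $f_{ij}\in N_R(T_{n-j+1}(R))$ for all $1\le i\le j\le n$. Also, $f(C)_\ell=0$ for all $C\in T_n(R)$ if and only if $f_{ij}\in N_R(T_i(R))$ for all $1\le i\le j\le n$. Equivalently, under the identification of $(T_n(R))[x]$ with $T_n(R[x])$ via $f\mapsto(f_{ij})$, the set $N_{T_n(R)}(T_n(R))$ of right null-polynomials is the set of upper triangular matrices whose $(i,j)$-entry ($i\le j$) lies in $N_R(T_{n-j+1}(R))$, and the set $N^{\ell}_{T_n(R)}(T_n(R))$ of left null-polynomials is the set of upper triangular matrices whose $(i,j)$-entry ($i\le j$) lies in $N_R(T_i(R))$.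
   Context: $T_n(A)$ denotes the ring of upper triangular $n\times n$ matrices over a ring $A$. For $f=\sum_k F_kx^k\in(T_n(R))[x]$ with $F_k\in T_n(R)$, right substitution is $f(C)=\sum_kF_kC^k$ and left substitution is $f(C)_\ell=\sum_kC^kF_k$. Writing $f_{ij}^{(k)}$ for the $(i,j)$-entry of $F_k$, set $f_{ij}=\sum_k f_{ij}^{(k)}x^k\in R[x]$; the map $f\mapsto(f_{ij})$ is a ring isomorphism $(T_n(R))[x]\to T_n(R[x])$. For $m\ge1$, $N_R(T_m(R))=\{g\in R[x]\mid \forall C\in T_m(R):\ g(C)=0\}$ (usual evaluation). $N_{T_n(R)}(T_n(R))=\{f\in(T_n(R))[x]\mid\forall C\in T_n(R):\ f(C)=0\}$ and $N^{\ell}_{T_n(R)}(T_n(R))=\{f\in(T_n(R))[x]\mid\forall C\in T_n(R):\ f(C)_\ell=0\}$. *)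

theory Defs
  imports "HOL-Computational_Algebra.Polynomial"
begin

text \<open>Square matrices of size n are represented as functions nat => nat => 'a,
  indices 1..n, entries outside the index range being 0.\<close>

type_synonym 'a sqmat = "nat \<Rightarrow> nat \<Rightarrow> 'a"

definition upper_tri :: "nat \<Rightarrow> 'a::zero sqmat \<Rightarrow> bool" where
  "upper_tri n A \<longleftrightarrow> (\<forall>i j. A i j \<noteq> 0 \<longrightarrow> 1 \<le> i \<and> i \<le> j \<and> j \<le> n)"

definition Tmats :: "nat \<Rightarrow> 'a::zero sqmat set" where
  "Tmats n = {A. upper_tri n A}"

definition mat_mult :: "nat \<Rightarrow> 'a::comm_ring_1 sqmat \<Rightarrow> 'a sqmat \<Rightarrow> 'a sqmat" where
  "mat_mult n A B = (\<lambda>i j. \<Sum>k\<in>{1..n}. A i k * B k j)"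

definition mat_one :: "nat \<Rightarrow> 'a::comm_ring_1 sqmat" where
  "mat_one n = (\<lambda>i j. if i = j \<and> 1 \<le> i \<and> i \<le> n then 1 else 0)"

fun mat_pow :: "nat \<Rightarrow> 'a::comm_ring_1 sqmat \<Rightarrow> nat \<Rightarrow> 'a sqmat" where
  "mat_pow n C 0 = mat_one n"
| "mat_pow n C (Suc k) = mat_mult n (mat_pow n C k) C"

definition poly_mat :: "nat \<Rightarrow> 'a::comm_ring_1 poly \<Rightarrow> 'a sqmat \<Rightarrow> 'a sqmat" where
  "poly_mat m g C = (\<lambda>i j. \<Sum>k\<le>degree g. coeff g k * mat_pow m C k i j)"

definition nullR :: "nat \<Rightarrow> 'a::comm_ring_1 poly set" where
  "nullR m = {g. \<forall>C\<in>Tmats m. poly_mat m g C = (\<lambda>i j. 0)}"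

text \<open>A polynomial f in (T_n(R))[x] is represented by its entry polynomials
  f_ij (identification (T_n(R))[x] = T_n(R[x])); its k-th coefficient matrix
  F_k has (i,j)-entry coeff (f i j) k.\<close>
definition coeff_mat :: "'a::comm_ring_1 poly sqmat \<Rightarrow> nat \<Rightarrow> 'a sqmat" where
  "coeff_mat f k = (\<lambda>i j. coeff (f i j) k)"

definition mdeg :: "nat \<Rightarrow> 'a::comm_ring_1 poly sqmat \<Rightarrow> nat" where
  "mdeg n f = Max {degree (f i j) | i j. i \<in> {1..n} \<and> j \<in> {1..n}}"

definition eval_right :: "nat \<Rightarrow> 'a::comm_ring_1 poly sqmat \<Rightarrow> 'a sqmat \<Rightarrow> 'a sqmat" where
  "eval_right n f C = (\<lambda>i j. \<Sum>k\<le>mdeg n f. mat_mult n (coeff_mat f k) (mat_pow n C k) i j)"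

definition eval_left :: "nat \<Rightarrow> 'a::comm_ring_1 poly sqmat \<Rightarrow> 'a sqmat \<Rightarrow> 'a sqmat" where
  "eval_left n f C = (\<lambda>i j. \<Sum>k\<le>mdeg n f. mat_mult n (mat_pow n C k) (coeff_mat f k) i j)"

end

theory Submission
  imports Defs
begin
lemma ut_D: "upper_tri n A \<Longrightarrow> A i j \<noteq> 0 \<Longrightarrow> 1 \<le> i \<and> i \<le> j \<and> j \<le> n"
  by (auto simp: upper_tri_def)

lemma ut_0: "upper_tri n A \<Longrightarrow> \<not> (1 \<le> i \<and> i \<le> j \<and> j \<le> n) \<Longrightarrow> A i j = 0"
  using ut_D by blast

lemma pow_ut:
  assumes "C \<in> Tmats n" shows "upper_tri n (mat_pow n C k)"
proof (induction k)
  case 0 then show ?case by (auto simp: upper_tri_def mat_one_def)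
next
  case (Suc k)
  have C: "upper_tri n C" using assms by (simp add: Tmats_def)
  show ?case unfolding upper_tri_def
  proof (intro allI impI)
    fix i j assume ne: "mat_pow n C (Suc k) i j \<noteq> 0"
    then obtain r where r: "r \<in> {1..n}" "mat_pow n C k i r * C r j \<noteq> 0"
      using sum.not_neutral_contains_not_neutral[of "\<lambda>r. mat_pow n C k i r * C r j" "{1..n}"]
      by (auto simp: mat_mult_def)
    hence "mat_pow n C k i r \<noteq> 0" "C r j \<noteq> 0" by auto
    then show "1 \<le> i \<and> i \<le> j \<and> j \<le> n" using ut_D[OF Suc.IH] ut_D[OF C] by (meson order_trans)
  qed
qed

lemma mm_restrict:
  assumes "upper_tri m A" "upper_tri m B" "1 \<le> x" "y \<le> m"
  shows "mat_mult m A B x y = (\<Sum>r\<in>{x..y}. A x r * B r y)"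
proof -
 have "(\<Sum>r\<in>{1..m}. A x r * B r y) = (\<Sum>r\<in>{x..y}. A x r * B r y)"
 proof (rule sum.mono_neutral_right)
  show "finite {1..m}" by simp
  show "{x..y} \<subseteq> {1..m}" using assms by auto
  show "\<forall>r\<in>{1..m} - {x..y}. A x r * B r y = 0"
  proof
    fix r assume "r \<in> {1..m} - {x..y}"
    hence "r < x \<or> r > y" by auto
    then show "A x r * B r y = 0" using ut_0[OF assms(1), of x r] ut_0[OF assms(2), of r y] by auto
  qed
 qed
 thus ?thesis by (simp add: mat_mult_def)
qed

lemma pow_transfer:
  assumes C: "C \<in> Tmats n" and D: "D \<in> Tmats m" and p: "1 \<le> p" and q: "q \<le> m" "q + s \<le> n"
    and eq: "\<forall>x y. p \<le> x \<and> x \<le> y \<and> y \<le> q \<longrightarrow> D x y = C (x+s) (y+s)"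
  shows "p \<le> x \<Longrightarrow> x \<le> y \<Longrightarrow> y \<le> q \<Longrightarrow> mat_pow m D k x y = mat_pow n C k (x+s) (y+s)"
proof (induction k arbitrary: x y)
  case 0 then show ?case using p q by (auto simp: mat_one_def)
next
  case (Suc k)
  have Cu: "upper_tri n C" and Du: "upper_tri m D" using C D by (auto simp: Tmats_def)
  have "mat_pow m D (Suc k) x y = (\<Sum>r\<in>{x..y}. mat_pow m D k x r * D r y)"
    using mm_restrict[OF pow_ut[OF D] Du] Suc.prems p q by simp
  also have "\<dots> = (\<Sum>r\<in>{x..y}. mat_pow n C k (x+s) (r+s) * C (r+s) (y+s))"
    using Suc.IH Suc.prems eq by (intro sum.cong) auto
  also have "\<dots> = (\<Sum>r\<in>{x+s..y+s}. mat_pow n C k (x+s) r * C r (y+s))"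
    by (rule sum.shift_bounds_cl_nat_ivl[symmetric])
  also have "\<dots> = mat_pow n C (Suc k) (x+s) (y+s)"
    using mm_restrict[OF pow_ut[OF C] Cu] Suc.prems p q by simp
  finally show ?case .
qed

lemma pm_transfer:
  assumes "C \<in> Tmats n" "D \<in> Tmats m" "1 \<le> p" "q \<le> m" "q + s \<le> n"
    "\<forall>x y. p \<le> x \<and> x \<le> y \<and> y \<le> q \<longrightarrow> D x y = C (x+s) (y+s)"
    "p \<le> x" "x \<le> y" "y \<le> q"
  shows "poly_mat m g D x y = poly_mat n g C (x+s) (y+s)"
  unfolding poly_mat_def using pow_transfer[OF assms(1-6)] assms(7-9) by simp

lemma pm0:
  assumes "C \<in> Tmats n" "\<not> (1 \<le> x \<and> x \<le> y \<and> y \<le> n)"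
  shows "poly_mat n g C x y = 0"
  unfolding poly_mat_def using ut_0[OF pow_ut[OF assms(1)] assms(2)] by simp

lemma pm_zero_poly[simp]: "poly_mat n 0 C x y = 0"
  by (simp add: poly_mat_def)

lemma null_small:
  assumes g: "g \<in> nullR m" and C: "C \<in> Tmats n" and xy: "1 \<le> x" "x \<le> y" "y \<le> n" "y - x + 1 \<le> m"
  shows "poly_mat n g C x y = 0"
proof -
  define q where "q = y - x + 1"
  define D where "D = (\<lambda>a b. if 1 \<le> a \<and> b \<le> q then C (a+(x-1)) (b+(x-1)) else 0)"
  have Cu: "upper_tri n C" using C by (simp add: Tmats_def)
  have D: "D \<in> Tmats m" unfolding Tmats_def upper_tri_def
  proof (intro CollectI allI impI)
    fix a b assume "D a b \<noteq> 0"
    then have ab: "1 \<le> a" "b \<le> q" "C (a+(x-1)) (b+(x-1)) \<noteq> 0" by (auto simp: D_def split: if_splits)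
    then have "a+(x-1) \<le> b+(x-1)" using ut_D[OF Cu] by blast
    then show "1 \<le> a \<and> a \<le> b \<and> b \<le> m" using ab xy q_def by simp
  qed
  have "poly_mat m g D 1 q = poly_mat n g C (1+(x-1)) (q+(x-1))"
    by (rule pm_transfer[OF C D, where p=1 and q=q]) (use xy q_def D_def in auto)
  moreover have "poly_mat m g D 1 q = 0" using g D by (simp add: nullR_def)
  moreover have "1+(x-1) = x" "q+(x-1) = y" using xy q_def by auto
  ultimately show ?thesis by simp
qed

lemma null_lastcol:
  assumes m: "1 \<le> m" and h: "\<forall>D\<in>Tmats m. \<forall>a. 1 \<le> a \<and> a \<le> m \<longrightarrow> poly_mat m g D a m = 0"
  shows "g \<in> nullR m"
  unfolding nullR_def
proof (intro CollectI ballI ext)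
  fix D :: "'a sqmat" and a b assume D: "D \<in> Tmats m"
  show "poly_mat m g D a b = 0"
  proof (cases "1 \<le> a \<and> a \<le> b \<and> b \<le> m")
    case False then show ?thesis using pm0[OF D] by blast
  next
    case True
    define s where "s = m - b"
    define D' where "D' = (\<lambda>x y. if s < x \<and> y \<le> m then D (x-s) (y-s) else 0)"
    have Du: "upper_tri m D" using D by (simp add: Tmats_def)
    have D': "D' \<in> Tmats m" unfolding Tmats_def upper_tri_def
    proof (intro CollectI allI impI)
      fix x y assume "D' x y \<noteq> 0"
      then have xy: "s < x" "y \<le> m" "D (x-s) (y-s) \<noteq> 0" by (auto simp: D'_def split: if_splits)
      then have "x-s \<le> y-s" using ut_D[OF Du] by blast
      then show "1 \<le> x \<and> x \<le> y \<and> y \<le> m" using xy by simp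
    qed
    have "poly_mat m g D a b = poly_mat m g D' (a+s) (b+s)"
      by (rule pm_transfer[OF D' D, where p=1 and q=b]) (use True s_def D'_def in auto)
    also have "b + s = m" using True s_def by simp
    also have "1 \<le> a+s \<and> a+s \<le> m" using True s_def by auto
    then have "poly_mat m g D' (a+s) m = 0" using h D' by blast
    finally show ?thesis .
  qed
qed

lemma null_firstrow:
  assumes m: "1 \<le> m" and h: "\<forall>D\<in>Tmats m. \<forall>c. 1 \<le> c \<and> c \<le> m \<longrightarrow> poly_mat m g D 1 c = 0"
  shows "g \<in> nullR m"
  unfolding nullR_def
proof (intro CollectI ballI ext)
  fix D :: "'a sqmat" and a b assume D: "D \<in> Tmats m"
  show "poly_mat m g D a b = 0"
  proof (cases "1 \<le> a \<and> a \<le> b \<and> b \<le> m")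
    case False then show ?thesis using pm0[OF D] by blast
  next
    case True
    define s where "s = a - 1"
    define D' where "D' = (\<lambda>x y. if 1 \<le> x \<and> y \<le> m - s then D (x+s) (y+s) else 0)"
    have Du: "upper_tri m D" using D by (simp add: Tmats_def)
    have D': "D' \<in> Tmats m" unfolding Tmats_def upper_tri_def
    proof (intro CollectI allI impI)
      fix x y assume "D' x y \<noteq> 0"
      then have xy: "1 \<le> x" "y \<le> m - s" "D (x+s) (y+s) \<noteq> 0" by (auto simp: D'_def split: if_splits)
      then have "x+s \<le> y+s" using ut_D[OF Du] by blast
      then show "1 \<le> x \<and> x \<le> y \<and> y \<le> m" using xy by simp
    qed
    have "poly_mat m g D' 1 (b-s) = poly_mat m g D (1+s) (b-s+s)"
      by (rule pm_transfer[OF D D', where p=1 and q="m-s"]) (use True s_def D'_def in auto)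
    moreover have "1+s = a" "b-s+s = b" using True s_def by auto
    moreover have "1 \<le> b-s \<and> b-s \<le> m" using True s_def by auto
    then have "poly_mat m g D' 1 (b-s) = 0" using h D' by blast
    ultimately show ?thesis by simp
  qed
qed

lemma deg_le_mdeg:
  assumes "upper_tri n f" "l \<in> {1..n}"
  shows "degree (f i l) \<le> mdeg n f"
proof (cases "i \<in> {1..n}")
  case False
  then have "f i l = 0" using ut_0[OF assms(1)] by auto
  then show ?thesis by simp
next
  case True
  have fin: "finite {degree (f i j) | i j. i \<in> {1..n} \<and> j \<in> {1..n}}"
  proof -
    have "{degree (f i j) | i j. i \<in> {1..n} \<and> j \<in> {1..n}} = (\<lambda>(i,j). degree (f i j)) ` ({1..n} \<times> {1..n})"
      by (auto; blast)
    thus ?thesis by simp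
  qed
  show ?thesis unfolding mdeg_def using True assms(2) by (intro Max_ge[OF fin]) blast
qed

lemma sum_deg_ext:
  fixes g :: "'a::comm_ring_1 poly"
  assumes "degree g \<le> M"
  shows "(\<Sum>k\<le>M. coeff g k * h k) = (\<Sum>k\<le>degree g. coeff g k * h k)"
proof (rule sum.mono_neutral_right)
  show "\<forall>i\<in>{..M} - {..degree g}. coeff g i * h i = 0" by (auto simp: coeff_eq_0)
qed (use assms in auto)

lemma ER:
  assumes "upper_tri n f"
  shows "eval_right n f C i j = (\<Sum>l\<in>{1..n}. poly_mat n (f i l) C l j)"
proof -
  have "eval_right n f C i j = (\<Sum>k\<le>mdeg n f. \<Sum>l\<in>{1..n}. coeff (f i l) k * mat_pow n C k l j)"
    by (simp add: eval_right_def mat_mult_def coeff_mat_def)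
  also have "\<dots> = (\<Sum>l\<in>{1..n}. \<Sum>k\<le>mdeg n f. coeff (f i l) k * mat_pow n C k l j)"
    by (rule sum.swap)
  also have "\<dots> = (\<Sum>l\<in>{1..n}. poly_mat n (f i l) C l j)"
  proof (intro sum.cong refl)
    fix l assume l: "l \<in> {1..n}"
    show "(\<Sum>k\<le>mdeg n f. coeff (f i l) k * mat_pow n C k l j) = poly_mat n (f i l) C l j"
      unfolding poly_mat_def by (rule sum_deg_ext[OF deg_le_mdeg[OF assms l]])
  qed
  finally show ?thesis .
qed

lemma EL:
  assumes "upper_tri n f"
  shows "eval_left n f C i j = (\<Sum>l\<in>{1..n}. poly_mat n (f l j) C i l)"
proof -
  have "eval_left n f C i j = (\<Sum>k\<le>mdeg n f. \<Sum>l\<in>{1..n}. coeff (f l j) k * mat_pow n C k i l)"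
    by (simp add: eval_left_def mat_mult_def coeff_mat_def mult.commute)
  also have "\<dots> = (\<Sum>l\<in>{1..n}. \<Sum>k\<le>mdeg n f. coeff (f l j) k * mat_pow n C k i l)"
    by (rule sum.swap)
  also have "\<dots> = (\<Sum>l\<in>{1..n}. poly_mat n (f l j) C i l)"
  proof (intro sum.cong refl)
    fix l assume l: "l \<in> {1..n}"
    have "degree (f l j) \<le> mdeg n f"
    proof (cases "j \<in> {1..n}")
      case True show ?thesis using deg_le_mdeg[OF assms True, of l] by simp
    next
      case False then have "f l j = 0" using ut_0[OF assms] by auto
      then show ?thesis by simp
    qed
    then show "(\<Sum>k\<le>mdeg n f. coeff (f l j) k * mat_pow n C k i l) = poly_mat n (f l j) C i l"
      unfolding poly_mat_def by (rule sum_deg_ext)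
  qed
  finally show ?thesis .
qed

lemma sum_single:
  assumes "finite A" "l \<in> A" "\<forall>p\<in>A. p \<noteq> l \<longrightarrow> h p = 0"
  shows "sum h A = h l"
  using assms by (simp add: sum.remove sum.neutral)

lemma pow_lowrows:
  assumes "\<forall>a b. a < l \<longrightarrow> C a b = 0" "p < l" "l \<le> j"
  shows "mat_pow n C k p j = 0"
  using assms(3)
proof (induction k arbitrary: j)
  case 0 then show ?case using assms(2) by (simp add: mat_one_def)
next
  case (Suc k)
  have "\<forall>r. mat_pow n C k p r * C r j = 0"
  proof
    fix r show "mat_pow n C k p r * C r j = 0"
      using Suc.IH[of r] assms(1) by (cases "l \<le> r") auto
  qed
  then show ?case by (simp add: mat_mult_def)
qed

lemma pm_lowrows:
  assumes "\<forall>a b. a < l \<longrightarrow> C a b = 0" "p < l" "l \<le> j"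
  shows "poly_mat n g C p j = 0"
  unfolding poly_mat_def using pow_lowrows[OF assms] by simp

lemma pm_highcols:
  assumes "\<forall>a b. b > q \<longrightarrow> C a b = 0" "a \<le> q" "q < j"
  shows "poly_mat n g C a j = 0"
proof -
  have "mat_pow n C k a j = 0" for k
  proof (cases k)
    case 0 then show ?thesis using assms by (simp add: mat_one_def)
  next
    case (Suc k') then show ?thesis using assms(1,3) by (simp add: mat_mult_def)
  qed
  then show ?thesis unfolding poly_mat_def by simp
qed

theorem corollary5p1:
  fixes f :: "'a::comm_ring_1 poly sqmat" and n :: nat
  assumes "n \<ge> 1" and "upper_tri n f"
  shows "((\<forall>C\<in>Tmats n. eval_right n f C = (\<lambda>i j. 0)) \<longleftrightarrow>
            (\<forall>i j. 1 \<le> i \<and> i \<le> j \<and> j \<le> n \<longrightarrow> f i j \<in> nullR (n - j + 1)))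
       \<and> ((\<forall>C\<in>Tmats n. eval_left n f C = (\<lambda>i j. 0)) \<longleftrightarrow>
            (\<forall>i j. 1 \<le> i \<and> i \<le> j \<and> j \<le> n \<longrightarrow> f i j \<in> nullR i))"
proof (intro conjI iffI)
  assume H: "\<forall>i j. 1 \<le> i \<and> i \<le> j \<and> j \<le> n \<longrightarrow> f i j \<in> nullR (n - j + 1)"
  show "\<forall>C\<in>Tmats n. eval_right n f C = (\<lambda>i j. 0)"
  proof (intro ballI ext)
    fix C :: "'a sqmat" and i j assume C: "C \<in> Tmats n"
    have "poly_mat n (f i l) C l j = 0" if l: "l \<in> {1..n}" for l
    proof (cases "1 \<le> i \<and> i \<le> l \<and> l \<le> j \<and> j \<le> n")
      case True
      then show ?thesis using null_small[OF H[rule_format] C, of i l l j] by auto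
    next
      case False
      show ?thesis
      proof (cases "1 \<le> i \<and> i \<le> l")
        case True then show ?thesis using False pm0[OF C] l by auto
      next
        case False then have "f i l = 0" using ut_0[OF assms(2)] by auto
        then show ?thesis by simp
      qed
    qed
    then show "eval_right n f C i j = 0" unfolding ER[OF assms(2)] by simp
  qed
next
  assume H: "\<forall>C\<in>Tmats n. eval_right n f C = (\<lambda>i j. 0)"
  have main: "\<forall>i. 1 \<le> i \<and> i \<le> l \<longrightarrow> f i l \<in> nullR (n - l + 1)" if "1 \<le> l" "l \<le> n" for l
    using that
  proof (induction "n - l" arbitrary: l rule: less_induct)
    case less
    show ?case
    proof (intro allI impI)
      fix i assume i: "1 \<le> i \<and> i \<le> l"
      define m where "m = n - l + 1"
      have m1: "1 \<le> m" by (simp add: m_def)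
      show "f i l \<in> nullR (n - l + 1)" unfolding m_def[symmetric]
      proof (rule null_firstrow[OF m1], intro ballI allI impI)
        fix D :: "'a sqmat" and c assume D: "D \<in> Tmats m" and c: "1 \<le> c \<and> c \<le> m"
        define C where "C = (\<lambda>a b. if l \<le> a \<and> b \<le> n then D (a-(l-1)) (b-(l-1)) else 0)"
        have Du: "upper_tri m D" using D by (simp add: Tmats_def)
        have C: "C \<in> Tmats n" unfolding Tmats_def upper_tri_def
        proof (intro CollectI allI impI)
          fix a b assume "C a b \<noteq> 0"
          then have ab: "l \<le> a" "b \<le> n" "D (a-(l-1)) (b-(l-1)) \<noteq> 0" by (auto simp: C_def split: if_splits)
          then have "1 \<le> a-(l-1)" "a-(l-1) \<le> b-(l-1)" using ut_D[OF Du] by blast+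
          then show "1 \<le> a \<and> a \<le> b \<and> b \<le> n" using ab less.prems by simp
        qed
        define j where "j = c + (l-1)"
        have j: "l \<le> j" "j \<le> n" using c less.prems m_def j_def by auto
        have tr: "poly_mat m (f i l) D 1 c = poly_mat n (f i l) C (1+(l-1)) (c+(l-1))"
          by (rule pm_transfer[OF C D, where p=1 and q=m]) (use c less.prems m_def C_def in auto)
        have "poly_mat n (f i p) C p j = 0" if p: "p \<in> {1..n}" "p \<noteq> l" for p
        proof (cases "p < l")
          case True
          have "\<forall>a b. a < l \<longrightarrow> C a b = 0" by (simp add: C_def)
          then show ?thesis using pm_lowrows True j by blast
        next
          case False
          then have pl: "l < p" using p by auto
          have IH: "f i p \<in> nullR (n - p + 1)"
            using less.hyps[of p] pl p i less.prems by auto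
          show ?thesis
          proof (cases "p \<le> j")
            case True then show ?thesis using null_small[OF IH C, of p j] p j by auto
          next
            case False then show ?thesis using pm0[OF C] by auto
          qed
        qed
        then have "eval_right n f C i j = poly_mat n (f i l) C l j"
          unfolding ER[OF assms(2)] using less.prems by (intro sum_single) auto
        moreover have "eval_right n f C i j = 0" using H C by simp
        ultimately show "poly_mat m (f i l) D 1 c = 0" using tr less.prems j_def by simp
      qed
    qed
  qed
  show "\<forall>i j. 1 \<le> i \<and> i \<le> j \<and> j \<le> n \<longrightarrow> f i j \<in> nullR (n - j + 1)"
    using main by auto
next
  assume H: "\<forall>i j. 1 \<le> i \<and> i \<le> j \<and> j \<le> n \<longrightarrow> f i j \<in> nullR i"
  show "\<forall>C\<in>Tmats n. eval_left n f C = (\<lambda>i j. 0)"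
  proof (intro ballI ext)
    fix C :: "'a sqmat" and i j assume C: "C \<in> Tmats n"
    have "poly_mat n (f l j) C i l = 0" if l: "l \<in> {1..n}" for l
    proof (cases "l \<le> j \<and> j \<le> n")
      case True
      show ?thesis
      proof (cases "1 \<le> i \<and> i \<le> l")
        case True then show ?thesis using null_small[OF H[rule_format] C, of l j i l] l \<open>l \<le> j \<and> j \<le> n\<close> by auto
      next
        case False then show ?thesis using pm0[OF C] l by auto
      qed
    next
      case False then have "f l j = 0" using ut_0[OF assms(2)] by auto
      then show ?thesis by simp
    qed
    then show "eval_left n f C i j = 0" unfolding EL[OF assms(2)] by simp
  qed
next
  assume H: "\<forall>C\<in>Tmats n. eval_left n f C = (\<lambda>i j. 0)"
  have main: "\<forall>j. l \<le> j \<and> j \<le> n \<longrightarrow> f l j \<in> nullR l" if "1 \<le> l" "l \<le> n" for l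
    using that
  proof (induction l rule: less_induct)
    case (less l)
    show ?case
    proof (intro allI impI)
      fix j assume j: "l \<le> j \<and> j \<le> n"
      show "f l j \<in> nullR l"
      proof (rule null_lastcol[OF less.prems(1)], intro ballI allI impI)
        fix D :: "'a sqmat" and a assume D: "D \<in> Tmats l" and a: "1 \<le> a \<and> a \<le> l"
        define C where "C = (\<lambda>x y. if y \<le> l then D x y else 0)"
        have Du: "upper_tri l D" using D by (simp add: Tmats_def)
        have C: "C \<in> Tmats n" unfolding Tmats_def upper_tri_def
        proof (intro CollectI allI impI)
          fix x y assume "C x y \<noteq> 0"
          then have xy: "y \<le> l" "D x y \<noteq> 0" by (auto simp: C_def split: if_splits)
          then have "1 \<le> x \<and> x \<le> y \<and> y \<le> l" using ut_D[OF Du] by blast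
          then show "1 \<le> x \<and> x \<le> y \<and> y \<le> n" using xy less.prems by simp
        qed
        have tr: "poly_mat l (f l j) D a l = poly_mat n (f l j) C (a+0) (l+0)"
          by (rule pm_transfer[OF C D, where p=1 and q=l]) (use a less.prems C_def in auto)
        have "poly_mat n (f p j) C a p = 0" if p: "p \<in> {1..n}" "p \<noteq> l" for p
        proof (cases "l < p")
          case True
          have "\<forall>x y. y > l \<longrightarrow> C x y = 0" by (simp add: C_def)
          then show ?thesis using pm_highcols True a by blast
        next
          case False
          then have pl: "p < l" using p by auto
          show ?thesis
          proof (cases "p \<le> j")
            case False then have "f p j = 0" using ut_0[OF assms(2)] by auto
            then show ?thesis by simp
          next
            case True
            have IH: "f p j \<in> nullR p" using less.IH[of p] pl p True j by auto
            show ?thesis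
            proof (cases "a \<le> p")
              case True then show ?thesis using null_small[OF IH C, of a p] p a by auto
            next
              case False then show ?thesis using pm0[OF C] by auto
            qed
          qed
        qed
        then have "eval_left n f C a j = poly_mat n (f l j) C a l"
          unfolding EL[OF assms(2)] using less.prems by (intro sum_single) auto
        moreover have "eval_left n f C a j = 0" using H C by simp
        ultimately show "poly_mat l (f l j) D a l = 0" using tr by simp
      qed
    qed
  qed
  show "\<forall>i j. 1 \<le> i \<and> i \<le> j \<and> j \<le> n \<longrightarrow> f i j \<in> nullR i"
    using main by auto
qed

end
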